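(* In the manifold decomposition game, the Grundy value of the position consisting of the single surface $og$ is $G(o0)=0$, $G(o1)=1$, and for $g\ge 2$, $G(og)=2$ if $g$ is even and $G(og)=0$ if $g$ is odd. (In the paper's notation, the $G$-series of $og$ is $01\dot{2}\dot{0}$.)
   Context: Notation: $og$ is the closed orientable surface of genus $g$ (connected sum of $g$ tori), with $o0$ the sphere. The manifold decomposition game: a position is a finite disjoint union of compact connected surfaces without boundary. Two players alternate moves. A move consists of choosing one component $S$ and performing a proper decomposition of it: choose an essential simple closed curve $J$ on $S$ (not null-homotopic, equivalently not bounding a disk in $S$), take a tubular neighborhood of $J$ (an annulus or a Möbius band), remove its interior, and cap off each resulting boundary circle with a disk; $S$ is replaced by the resulting one or two surfaces. The game ends when every component is a sphere, and the last player able to move wins. The Grundy value $G$ of a position is defined recursively: a position with no moves has value $0$, and otherwise the value is the minimal excluded nonnegative integer (mex) of the values of positions reachable in one move. The $G$-series lists $G(o0),G(o1),G(o2),\dots$; dots over digits indicate a repeating block. *)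

theory Defs
  imports Main "HOL-Library.Multiset"
begin

text \<open>Every component reachable from the orientable surface of genus g is a closed
orientable surface, determined up to homeomorphism by its genus; a position is therefore
a finite multiset of genera (genus 0 = sphere).  Proper decompositions of the genus-g
component: cutting along a non-separating essential curve yields genus g-1 (needs g >= 1);
cutting along a separating essential curve yields genera a and g-a with 1 <= a < g.\<close>

definition moves :: "nat multiset \<Rightarrow> nat multiset set" where
  "moves P =
     {P - {#g#} + {#g - 1#} | g. g \<in># P \<and> 1 \<le> g}
   \<union> {P - {#g#} + {#a, g - a#} | g a. g \<in># P \<and> 1 \<le> a \<and> a < g}"

definition mex :: "nat set \<Rightarrow> nat" where
  "mex A = (LEAST n. n \<notin> A)"

definition gw :: "nat \<Rightarrow> nat" where
  "gw g = (if g = 0 then 0 else 2 * g - 1)"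

definition gweight :: "nat multiset \<Rightarrow> nat" where
  "gweight P = sum_mset (image_mset gw P)"

lemma gweight_add_mset: "gweight (add_mset g M) = gw g + gweight M"
  by (simp add: gweight_def)

lemma gweight_plus: "gweight (M + N) = gweight M + gweight N"
  by (simp add: gweight_def)

lemma gweight_remove_add:
  assumes "g \<in># P"
  shows "gweight (P - {#g#} + Q) + gw g = gweight P + gweight Q"
proof -
  have "P = add_mset g (P - {#g#})" using assms by simp
  then have "gweight P = gweight (P - {#g#}) + gw g"
    by (metis gweight_add_mset add.commute)
  then show ?thesis by (simp add: gweight_plus)
qed

lemma moves_decrease: "Q \<in> moves P \<Longrightarrow> gweight Q < gweight P"
proof -
  assume "Q \<in> moves P"
  then consider (a) g where "g \<in># P" "1 \<le> g" "Q = P - {#g#} + {#g - 1#}"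
    | (b) g a where "g \<in># P" "1 \<le> a" "a < g" "Q = P - {#g#} + {#a, g - a#}"
    unfolding moves_def by blast
  then show ?thesis
  proof cases
    case a
    have "gweight {#g - 1#} < gw g"
      using a by (simp add: gweight_def gw_def) arith
    then show ?thesis using gweight_remove_add[OF a(1), of "{#g - 1#}"] unfolding a(3) by linarith
  next
    case b
    have "gweight {#a, g - a#} < gw g"
      using b by (simp add: gweight_def gw_def)
    then show ?thesis using gweight_remove_add[OF b(1), of "{#a, g - a#}"] unfolding b(4) by linarith
  qed
qed

function grundy :: "nat multiset \<Rightarrow> nat" where
  "grundy P = mex ((\<lambda>Q. grundy Q) ` moves P)"
  by auto
termination
  by (relation "measure gweight") (auto intro: moves_decrease)

end

theory Submission
  imports Defs
begin

definition oc :: "nat multiset \<Rightarrow> nat" where "oc P = count P 1"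
definition ec :: "nat multiset \<Rightarrow> nat" where "ec P = size (filter_mset (\<lambda>x. even x \<and> 2 \<le> x) P)"
definition fv :: "nat multiset \<Rightarrow> nat" where
  "fv P = (if odd (oc P) then 1 else 0) + (if odd (ec P) then 2 else 0)"

lemma oc_rep: "g \<in># P \<Longrightarrow> oc (P - {#g#} + R) + (if g = 1 then 1 else 0) = oc P + count R 1"
proof -
  assume g: "g \<in># P"
  then have "count P g > 0" by simp
  then show ?thesis by (cases "g = 1") (auto simp: oc_def)
qed

lemma ec_rep: "g \<in># P \<Longrightarrow> ec (P - {#g#} + R) + (if even g \<and> 2 \<le> g then 1 else 0)
   = ec P + size (filter_mset (\<lambda>x. even x \<and> 2 \<le> x) R)"
proof -
  assume "g \<in># P"
  then have P: "P = add_mset g (P - {#g#})" by simp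
  have "ec P = ec (P - {#g#}) + (if even g \<and> 2 \<le> g then 1 else 0)"
    unfolding ec_def by (subst P) simp
  then show ?thesis by (simp add: ec_def)
qed

lemma arA: fixes oQ oP eQ eP g :: nat shows "oQ + (if g = 1 then 1 else 0) = oP + (if g - 1 = 1 then 1 else 0) \<Longrightarrow>
  eQ + (if even g \<and> 2 \<le> g then 1 else 0) = eP + (if even (g-1) \<and> 2 \<le> g - 1 then 1 else 0) \<Longrightarrow> 1 \<le> g \<Longrightarrow>
  odd oQ \<noteq> odd oP \<or> odd eQ \<noteq> odd eP"
proof -
  assume o: "oQ + (if g = 1 then 1 else 0) = oP + (if g - 1 = 1 then 1 else 0)"
    and e: "eQ + (if even g \<and> 2 \<le> g then 1 else 0) = eP + (if even (g-1) \<and> 2 \<le> g - 1 then 1 else 0)"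
    and g: "1 \<le> g"
  consider "g = 1" | "g = 2" | "g \<ge> 3" "even g" | "g \<ge> 3" "odd g" using g by linarith
  then show ?thesis
  proof cases
    case 1 then have "oQ + 1 = oP" using o by simp
    then show ?thesis by auto
  next
    case 2 then have "oQ = oP + 1" using o by simp
    then show ?thesis by auto
  next
    case 3 then have "eQ + 1 = eP" using e by auto
    then show ?thesis by auto
  next
    case 4 then have "eQ = eP + 1" using e by auto
    then show ?thesis by auto
  qed
qed

lemma arB: fixes oQ oP eQ eP g a :: nat shows "oQ + (if g = 1 then 1 else 0) = oP + (if a = 1 then 1 else 0) + (if g - a = 1 then 1 else 0) \<Longrightarrow>
  eQ + (if even g \<and> 2 \<le> g then 1 else 0) = eP + (if even a \<and> 2 \<le> a then 1 else 0)
       + (if even (g - a) \<and> 2 \<le> g - a then 1 else 0) \<Longrightarrow> 1 \<le> a \<Longrightarrow> a < g \<Longrightarrow>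
  odd oQ \<noteq> odd oP \<or> odd eQ \<noteq> odd eP"
proof -
  assume o: "oQ + (if g = 1 then 1 else 0) = oP + (if a = 1 then 1 else 0) + (if g - a = 1 then 1 else 0)"
    and e: "eQ + (if even g \<and> 2 \<le> g then 1 else 0) = eP + (if even a \<and> 2 \<le> a then 1 else 0)
       + (if even (g - a) \<and> 2 \<le> g - a then 1 else 0)"
    and a: "1 \<le> a" "a < g"
  have g2: "g \<ge> 2" using a by linarith
  have par: "even (g - a) \<longleftrightarrow> (even g \<longleftrightarrow> even a)" using a by (simp add: even_diff_nat)
  consider "odd g" | "even g" "even a" | "even g" "odd a" "a = 1 \<or> g - a = 1" | "even g" "odd a" "a \<noteq> 1" "g - a \<noteq> 1"
    by blast
  then show ?thesis
  proof cases
    case 1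
    then have "eQ = eP + 1"
    proof (cases "even a")
      case True
      then have "a \<ge> 2" using a by (cases "a = 1") auto
      then show ?thesis using e 1 True par by auto
    next
      case False
      then have "g - a \<ge> 2" using 1 par a by (cases "g - a = 1"; cases "g - a = 0") auto
      then show ?thesis using e 1 False par by auto
    qed
    then show ?thesis by auto
  next
    case 2
    then have "a \<ge> 2" "g - a \<ge> 2" using a par by (cases "a = 1"; cases "g - a = 1"; auto)+
    then have "eQ + 1 = eP + 2" using e 2 par g2 by auto
    then show ?thesis by auto
  next
    case 3
    then have "eQ + 1 = eP" using e par g2 by auto
    then show ?thesis by auto
  next
    case 4
    then have "eQ + 1 = eP" using e par g2 by auto
    then show ?thesis by auto
  qed
qed

lemma move_flips:
  assumes "Q \<in> moves P"
  shows "odd (oc Q) \<noteq> odd (oc P) \<or> odd (ec Q) \<noteq> odd (ec P)"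
proof -
  from assms consider (a) g where "g \<in># P" "1 \<le> g" "Q = P - {#g#} + {#g - 1#}"
    | (b) g a where "g \<in># P" "1 \<le> a" "a < g" "Q = P - {#g#} + {#a, g - a#}"
    unfolding moves_def by blast
  then show ?thesis
  proof cases
    case a
    have o: "oc Q + (if g = 1 then 1 else 0) = oc P + (if g - 1 = 1 then 1 else 0)"
      using oc_rep[OF a(1), of "{#g - 1#}"] a(3) by simp
    have e: "ec Q + (if even g \<and> 2 \<le> g then 1 else 0) = ec P + (if even (g-1) \<and> 2 \<le> g - 1 then 1 else 0)"
      using ec_rep[OF a(1), of "{#g - 1#}"] a(3) by simp
    show ?thesis using arA[OF o e a(2)] .
  next
    case b
    have o: "oc Q + (if g = 1 then 1 else 0) = oc P + (if a = 1 then 1 else 0) + (if g - a = 1 then 1 else 0)"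
      using oc_rep[OF b(1), of "{#a, g - a#}"] b(4) by simp
    have e: "ec Q + (if even g \<and> 2 \<le> g then 1 else 0) = ec P + (if even a \<and> 2 \<le> a then 1 else 0)
       + (if even (g - a) \<and> 2 \<le> g - a then 1 else 0)"
      using ec_rep[OF b(1), of "{#a, g - a#}"] b(4) by simp
    show ?thesis using arB[OF o e b(2,3)] .
  qed
qed

lemma fv_ne: "Q \<in> moves P \<Longrightarrow> fv Q \<noteq> fv P"
  using move_flips[of Q P] unfolding fv_def by (auto split: if_splits)

lemma mv2: "g \<in># P \<Longrightarrow> 1 \<le> g \<Longrightarrow> P - {#g#} + {#g - 1#} \<in> moves P"
  unfolding moves_def by (rule UnI1) (rule CollectI, rule exI[of _ g], simp)
lemma mv1: "1 \<in># P \<Longrightarrow> P - {#1#} + {#0#} \<in> moves P"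
  using mv2[of 1 P] by simp
lemma mv3: "g \<in># P \<Longrightarrow> 1 < g \<Longrightarrow> P - {#g#} + {#1, g - 1#} \<in> moves P"
  unfolding moves_def by (rule UnI2) (rule CollectI, rule exI[of _ g], rule exI[of _ 1], simp)

lemma h1: "(u::nat) + 1 = v \<Longrightarrow> odd u \<noteq> odd v" by auto
lemma h2: "(x::nat) = y + 2 \<Longrightarrow> odd x = odd y" by auto
lemma h3: "(x::nat) = y + 1 \<Longrightarrow> odd x \<noteq> odd y" by auto

lemma flip_o: assumes "odd (oc P)" shows "\<exists>Q\<in>moves P. odd (oc Q) \<noteq> odd (oc P) \<and> odd (ec Q) = odd (ec P)"
proof -
  have "count P 1 \<noteq> 0" using assms unfolding oc_def by (rule contrapos_nn) simp
  then have m: "1 \<in># P" by simp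
  let ?Q = "P - {#1#} + {#0#}"
  have "oc ?Q + 1 = oc P" using oc_rep[OF m, of "{#0#}"] by simp
  then have 1: "odd (oc ?Q) \<noteq> odd (oc P)" by (rule h1)
  have "ec ?Q = ec P" using ec_rep[OF m, of "{#0#}"] by simp
  then have 2: "odd (ec ?Q) = odd (ec P)" by simp
  show ?thesis using mv1[OF m] 1 2 by (intro bexI[of _ ?Q] conjI)
qed

lemma flip_e:
  assumes "odd (ec P)"
  shows "\<exists>Q\<in>moves P. odd (oc Q) = odd (oc P) \<and> odd (ec Q) \<noteq> odd (ec P)"
    and "\<exists>Q\<in>moves P. odd (oc Q) \<noteq> odd (oc P) \<and> odd (ec Q) \<noteq> odd (ec P)"
proof -
  have "ec P \<noteq> 0" using assms by (rule contrapos_nn) simp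
  then have "filter_mset (\<lambda>x. even x \<and> 2 \<le> x) P \<noteq> {#}" unfolding ec_def by (rule contrapos_nn) simp
  then obtain g where "g \<in># filter_mset (\<lambda>x. even x \<and> 2 \<le> x) P" by (rule multiset_nonemptyE)
  then have g: "g \<in># P" "even g" "2 \<le> g" by simp_all
  show "\<exists>Q\<in>moves P. odd (oc Q) = odd (oc P) \<and> odd (ec Q) \<noteq> odd (ec P)"
  proof (cases "g = 2")
    case True
    let ?Q = "P - {#g#} + {#1, g - 1#}"
    have "oc ?Q = oc P + 2" using oc_rep[OF g(1), of "{#1, g - 1#}"] True by simp
    then have 1: "odd (oc ?Q) = odd (oc P)" by (rule h2)
    have "ec ?Q + 1 = ec P" using ec_rep[OF g(1), of "{#1, g - 1#}"] True by simp
    then have 2: "odd (ec ?Q) \<noteq> odd (ec P)" by (rule h1)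
    have "?Q \<in> moves P" by (rule mv3[OF g(1)]) (use True in simp)
    then show ?thesis using 1 2 by (intro bexI[of _ ?Q] conjI)
  next
    case False
    let ?Q = "P - {#g#} + {#g - 1#}"
    have "oc ?Q = oc P" using oc_rep[OF g(1), of "{#g - 1#}"] False g by simp
    then have 1: "odd (oc ?Q) = odd (oc P)" by simp
    have "ec ?Q + 1 = ec P" using ec_rep[OF g(1), of "{#g - 1#}"] False g by auto
    then have 2: "odd (ec ?Q) \<noteq> odd (ec P)" by (rule h1)
    have "?Q \<in> moves P" by (rule mv2[OF g(1)]) (use g in simp)
    then show ?thesis using 1 2 by (intro bexI[of _ ?Q] conjI)
  qed
  show "\<exists>Q\<in>moves P. odd (oc Q) \<noteq> odd (oc P) \<and> odd (ec Q) \<noteq> odd (ec P)"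
  proof (cases "g = 2")
    case True
    let ?Q = "P - {#g#} + {#g - 1#}"
    have "oc ?Q = oc P + 1" using oc_rep[OF g(1), of "{#g - 1#}"] True by simp
    then have 1: "odd (oc ?Q) \<noteq> odd (oc P)" by (rule h3)
    have "ec ?Q + 1 = ec P" using ec_rep[OF g(1), of "{#g - 1#}"] True by simp
    then have 2: "odd (ec ?Q) \<noteq> odd (ec P)" by (rule h1)
    have "?Q \<in> moves P" by (rule mv2[OF g(1)]) (use g in simp)
    then show ?thesis using 1 2 by (intro bexI[of _ ?Q] conjI)
  next
    case False
    let ?Q = "P - {#g#} + {#1, g - 1#}"
    have "oc ?Q = oc P + 1" using oc_rep[OF g(1), of "{#1, g - 1#}"] False g by auto
    then have 1: "odd (oc ?Q) \<noteq> odd (oc P)" by (rule h3)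
    have "ec ?Q + 1 = ec P" using ec_rep[OF g(1), of "{#1, g - 1#}"] False g by auto
    then have 2: "odd (ec ?Q) \<noteq> odd (ec P)" by (rule h1)
    have "?Q \<in> moves P" by (rule mv3[OF g(1)]) (use g in simp)
    then show ?thesis using 1 2 by (intro bexI[of _ ?Q] conjI)
  qed
qed

lemma reach: "n < fv P \<Longrightarrow> n \<in> fv ` moves P"
proof -
  assume n: "n < fv P"
  show ?thesis
  proof (cases "odd (ec P)")
    case E: True
    obtain Q1 where Q1: "Q1 \<in> moves P" "odd (oc Q1) = odd (oc P)" "odd (ec Q1) \<noteq> odd (ec P)"
      using flip_e(1)[OF E] by blast
    obtain Q2 where Q2: "Q2 \<in> moves P" "odd (oc Q2) \<noteq> odd (oc P)" "odd (ec Q2) \<noteq> odd (ec P)"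
      using flip_e(2)[OF E] by blast
    show ?thesis
    proof (cases "odd (oc P)")
      case O: True
      obtain Q3 where Q3: "Q3 \<in> moves P" "odd (oc Q3) \<noteq> odd (oc P)" "odd (ec Q3) = odd (ec P)"
        using flip_o[OF O] by blast
      have "fv Q2 = 0" "fv Q1 = 1" "fv Q3 = 2" using Q1 Q2 Q3 O E by (auto simp: fv_def)
      moreover have "n = 0 \<or> n = 1 \<or> n = 2" using n O E by (auto simp: fv_def)
      moreover have "fv Q1 \<in> fv ` moves P" "fv Q2 \<in> fv ` moves P" "fv Q3 \<in> fv ` moves P"
        using Q1(1) Q2(1) Q3(1) by blast+
      ultimately show ?thesis by (elim disjE) simp_all
    next
      case O: False
      have "fv Q1 = 0" "fv Q2 = 1" using Q1 Q2 O E by (auto simp: fv_def)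
      moreover have "n = 0 \<or> n = 1" using n O E by (auto simp: fv_def)
      moreover have "fv Q1 \<in> fv ` moves P" "fv Q2 \<in> fv ` moves P"
        using Q1(1) Q2(1) by blast+
      ultimately show ?thesis by (elim disjE) simp_all
    qed
  next
    case E: False
    then have O: "odd (oc P)" "n = 0" using n by (auto simp: fv_def split: if_splits)
    obtain Q3 where Q3: "Q3 \<in> moves P" "odd (oc Q3) \<noteq> odd (oc P)" "odd (ec Q3) = odd (ec P)"
      using flip_o[OF O(1)] by blast
    have "fv Q3 = 0" using Q3 O E by (auto simp: fv_def)
    moreover have "fv Q3 \<in> fv ` moves P" using Q3(1) by blast
    ultimately show ?thesis using O(2) by simp
  qed
qed

lemma mex_eq: "n \<notin> A \<Longrightarrow> (\<And>m. m < n \<Longrightarrow> m \<in> A) \<Longrightarrow> mex A = n"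
  unfolding mex_def by (rule Least_equality) (auto simp: not_less[symmetric])

lemma grundy_fv: "grundy P = fv P"
proof (induction P rule: measure_induct_rule[of gweight])
  case (less P)
  have "grundy P = mex (grundy ` moves P)" by (rule grundy.simps)
  also have "grundy ` moves P = fv ` moves P"
  proof (rule image_cong[OF refl])
    fix Q assume "Q \<in> moves P"
    then show "grundy Q = fv Q" by (rule less.IH[OF moves_decrease])
  qed
  also have "mex (fv ` moves P) = fv P"
  proof (rule mex_eq)
    show "fv P \<notin> fv ` moves P"
    proof
      assume "fv P \<in> fv ` moves P"
      then obtain Q where "Q \<in> moves P" "fv P = fv Q" by blast
      then show False using fv_ne by metis
    qed
  next
    fix m assume "m < fv P"
    then show "m \<in> fv ` moves P" by (rule reach)
  qed
  finally show ?case .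
qed

theorem theorem2p3:
  shows "grundy {#0#} = 0 \<and> grundy {#1#} = 1 \<and>
         (\<forall>g::nat. g \<ge> 2 \<longrightarrow> grundy {#g#} = (if even g then 2 else 0))"
  unfolding grundy_fv by (auto simp: fv_def oc_def ec_def)

end
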